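(* Fix a Polish sample space $\Omega$ and let $F,R$ be partially ordered topological spaces that are Souslin spaces with Borel order relations. The evaluation map $$\mathrm{ev}:\mathrm{DP}_\Omega(F,R)\times F^{\mathbb N}\times R^{\mathbb N}\to\mathrm{Bool},\quad (\mathrm{dp},(x_{F,i})_{i\in\mathbb N},(x_{R,i})_{i\in\mathbb N})\mapsto\big(\forall i\in\mathbb N,\ (x_{F,i},x_{R,i})\in\mathrm{dp}\big)$$ is quasi-measurable.
   Context: A Souslin space is a Hausdorff space that is a continuous image of a Polish space; analytic sets are continuous images of Polish spaces; a subset of a Polish space is universally measurable if it is measurable for the completion of the Borel $\sigma$-algebra with respect to every Borel probability measure. Quasi-universal spaces: a set $A$ with a set of maps $\Omega\to A$ (random variables) containing constants and closed under precomposition with Borel measurable maps $\Omega\to\Omega$; a map $f:A\to B$ is quasi-measurable if $f\circ\alpha$ is a random variable of $B$ for every random variable $\alpha$ of $A$; random variables of a product are pairs (tuples) of random variables. Conventions: the random variables of $F$ (resp. $R$) are the Borel measurable maps $\Omega\to F$; those of $\mathbb N$ are the measurable maps into $\mathbb N$ (discrete); $\mathrm{Bool}=\{\bot,\top\}$ has as random variables the maps $\Omega\to\mathrm{Bool}$ whose preimage of $\top$ is universally measurable. $F^{\mathbb N}$ is the set of sequences in $F$ (quasi-measurable maps $\mathbb N\to F$), whose random variables are the maps $\beta:\Omega\to F^{\mathbb N}$ such that $\omega\mapsto\beta(\varphi(\omega))(\gamma(\omega))$ is a random variable of $F$ for every random variable $\gamma$ of $\mathbb N$ and every measurable $\varphi:\Omega\to\Omega$;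 likewise for $R^{\mathbb N}$. $\mathrm{DP}_\Omega(F,R)$ is the set of upper sets of $F^{\mathrm{op}}\times R$ ($F$ with reversed order, componentwise order) of the form $\uparrow A$ with $A$ analytic, whose random variables are the maps $\alpha:\Omega\to\mathrm{DP}_\Omega(F,R)$ with analytic feasible set $\{(\omega,x_F,x_R):(x_F,x_R)\in\alpha(\omega)\}\subseteq\Omega\times F\times R$. *)

theory Defs
  imports "HOL-Probability.Probability"
begin

definition Polish_space :: "'a topology \<Rightarrow> bool" where
  "Polish_space X \<longleftrightarrow> completely_metrizable_space X \<and> separable_space X"

text \<open>Every Polish space has cardinality at most the continuum, so (up to
  homeomorphism) every Polish space is carried by a subset of the type
  nat => real; quantifying over Polish topologies on that type is thus
  the same as quantifying over all Polish spaces.\<close>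

definition analytic_in :: "'a topology \<Rightarrow> 'a set \<Rightarrow> bool" where
  "analytic_in X A \<longleftrightarrow>
     (\<exists>(P :: (nat \<Rightarrow> real) topology) f.
        Polish_space P \<and> continuous_map P X f \<and> f ` topspace P = A)"

definition Souslin_space :: "'a topology \<Rightarrow> bool" where
  "Souslin_space X \<longleftrightarrow> Hausdorff_space X \<and> analytic_in X (topspace X)"

definition borel_order_relation :: "'a::{order,topological_space} itself \<Rightarrow> bool" where
  "borel_order_relation _ \<longleftrightarrow>
     {(x, y :: 'a). x \<le> y} \<in> sets (borel :: ('a \<times> 'a) measure)"

definition universally_measurable :: "'w::topological_space set \<Rightarrow> bool" where
  "universally_measurable A \<longleftrightarrow>
     (\<forall>M :: 'w measure. prob_space M \<and> sets M = sets borel \<longrightarrow> A \<in> sets (completion M))"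

definition rv_borel :: "('w::topological_space \<Rightarrow> 'a::topological_space) set" where
  "rv_borel = borel_measurable borel"

definition rv_nat :: "('w::topological_space \<Rightarrow> nat) set" where
  "rv_nat = measurable borel (count_space UNIV)"

definition rv_bool :: "('w::topological_space \<Rightarrow> bool) set" where
  "rv_bool = {\<alpha>. universally_measurable {\<omega>. \<alpha> \<omega>}}"

text \<open>Random variables of F^N (sequences in F; every map N -> F is quasi-measurable).\<close>
definition rv_seq :: "('w::topological_space \<Rightarrow> (nat \<Rightarrow> 'a::topological_space)) set" where
  "rv_seq = {\<beta>. \<forall>\<phi> \<in> (borel_measurable borel :: ('w \<Rightarrow> 'w) set). \<forall>\<gamma> \<in> (rv_nat :: ('w \<Rightarrow> nat) set).
                  (\<lambda>\<omega>. \<beta> (\<phi> \<omega>) (\<gamma> \<omega>)) \<in> rv_borel}"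

definition upclosure_op :: "('f::order \<times> 'r::order) set \<Rightarrow> ('f \<times> 'r) set" where
  "upclosure_op A = {(x, y). \<exists>(a, b) \<in> A. x \<le> a \<and> b \<le> y}"

definition DP :: "('f::{order,topological_space} \<times> 'r::{order,topological_space}) set set" where
  "DP = {upclosure_op A | A. analytic_in euclidean A}"

definition rv_DP ::
  "('w::topological_space \<Rightarrow> ('f::{order,topological_space} \<times> 'r::{order,topological_space}) set) set" where
  "rv_DP = {\<alpha>. (\<forall>\<omega>. \<alpha> \<omega> \<in> DP) \<and>
               analytic_in (euclidean :: ('w \<times> 'f \<times> 'r) topology) {(\<omega>, x, y). (x, y) \<in> \<alpha> \<omega>}}"

definition rv_prod3 :: "('w \<Rightarrow> 'a) set \<Rightarrow> ('w \<Rightarrow> 'b) set \<Rightarrow> ('w \<Rightarrow> 'c) set \<Rightarrow> ('w \<Rightarrow> 'a \<times> 'b \<times> 'c) set" where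
  "rv_prod3 RA RB RC = {\<alpha>. (\<lambda>\<omega>. fst (\<alpha> \<omega>)) \<in> RA \<and> (\<lambda>\<omega>. fst (snd (\<alpha> \<omega>))) \<in> RB
                           \<and> (\<lambda>\<omega>. snd (snd (\<alpha> \<omega>))) \<in> RC}"

definition quasi_measurable :: "('w \<Rightarrow> 'a) set \<Rightarrow> ('w \<Rightarrow> 'b) set \<Rightarrow> ('a \<Rightarrow> 'b) \<Rightarrow> bool" where
  "quasi_measurable RA RB f \<longleftrightarrow> (\<forall>\<alpha> \<in> RA. f \<circ> \<alpha> \<in> RB)"

definition ev :: "('f \<times> 'r) set \<times> (nat \<Rightarrow> 'f) \<times> (nat \<Rightarrow> 'r) \<Rightarrow> bool" where
  "ev = (\<lambda>(dp, xF, xR). \<forall>i. (xF i, xR i) \<in> dp)"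

end

theory Submission
  imports Defs
begin


definition om :: "'a measure \<Rightarrow> 'a set \<Rightarrow> real" where
  "om N A = Inf (measure N ` {B \<in> sets N. A \<subseteq> B})"

context finite_measure begin

lemma om_ne: "A \<subseteq> space M \<Longrightarrow> measure M ` {B \<in> sets M. A \<subseteq> B} \<noteq> {}"
  by auto

lemma om_bdd: "bdd_below (measure M ` {B \<in> sets M. A \<subseteq> B})"
  by (rule bdd_belowI[of _ 0]) auto

lemma om_le: "B \<in> sets M \<Longrightarrow> A \<subseteq> B \<Longrightarrow> om M A \<le> measure M B"
  unfolding om_def by (rule cInf_lower) (auto intro: om_bdd)

lemma om_ge0: "A \<subseteq> space M \<Longrightarrow> 0 \<le> om M A"
  unfolding om_def by (rule cInf_greatest) auto

lemma om_mono: "A \<subseteq> A' \<Longrightarrow> A' \<subseteq> space M \<Longrightarrow> om M A \<le> om M A'"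
  unfolding om_def by (rule cInf_superset_mono) (auto intro: om_bdd)

lemma om_hull:
  assumes "A \<subseteq> space M"
  shows "\<exists>H \<in> sets M. A \<subseteq> H \<and> measure M H = om M A"
proof -
  have "\<forall>n::nat. \<exists>B. B \<in> sets M \<and> A \<subseteq> B \<and> measure M B < om M A + 1/(Suc n)"
  proof
    fix n :: nat
    have "Inf (measure M ` {B \<in> sets M. A \<subseteq> B}) < om M A + 1/(Suc n)"
      unfolding om_def by simp
    from cInf_lessD[OF om_ne[OF assms] this] show "\<exists>B. B \<in> sets M \<and> A \<subseteq> B \<and> measure M B < om M A + 1/(Suc n)"
      by auto
  qed
  then obtain B where B: "\<And>n. B n \<in> sets M" "\<And>n. A \<subseteq> B n" "\<And>n. measure M (B n) < om M A + 1/(Suc n)"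
    by metis
  define H where "H = (\<Inter>n. B n)"
  have Hs: "H \<in> sets M" unfolding H_def using B(1) by auto
  have AH: "A \<subseteq> H" unfolding H_def using B(2) by auto
  have le: "om M A \<le> measure M H" using om_le[OF Hs AH] .
  have "measure M H \<le> om M A"
  proof (rule field_le_epsilon)
    fix e :: real assume "0 < e"
    then obtain n :: nat where n: "1 / Suc n < e"
      using nat_approx_posE by blast
    have "measure M H \<le> measure M (B n)"
      by (rule finite_measure_mono) (auto simp: H_def B(1))
    then show "measure M H \<le> om M A + e" using B(3)[of n] n by linarith
  qed
  then show ?thesis using Hs AH le by auto
qed

lemma om_incseq:
  assumes inc: "incseq A" and sp: "\<And>j. A j \<subseteq> space M" and gt: "om M (\<Union>j. A j) > c"
  shows "\<exists>j. om M (A j) > c"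
proof (rule ccontr)
  assume "\<not> ?thesis"
  then have le: "\<And>j. om M (A j) \<le> c" by (meson not_less)
  obtain H where H: "\<And>j. H j \<in> sets M" "\<And>j. A j \<subseteq> H j" "\<And>j. measure M (H j) = om M (A j)"
    using om_hull[OF sp] by metis
  define C where "C j = (\<Inter>i\<in>{j..}. H i)" for j
  have Cs: "C j \<in> sets M" for j unfolding C_def using H(1) by auto
  have AC: "A j \<subseteq> C j" for j
    unfolding C_def using H(2) inc by (auto simp: incseq_def) blast
  have CH: "C j \<subseteq> H j" for j unfolding C_def by auto
  have mC: "measure M (C j) \<le> c" for j
    using finite_measure_mono[OF CH[of j] H(1)[of j]] H(3)[of j] le[of j] by linarith
  have incC: "incseq C" unfolding incseq_def C_def by auto
  have lim: "(\<lambda>j. measure M (C j)) \<longlonglongrightarrow> measure M (\<Union>(range C))"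
    using finite_Lim_measure_incseq[OF _ incC] Cs by auto
  have "measure M (\<Union>(range C)) \<le> c"
    by (rule LIMSEQ_le_const2[OF lim]) (use mC in auto)
  moreover have "om M (\<Union>j. A j) \<le> measure M (\<Union>(range C))"
    by (rule om_le) (use Cs AC in auto)
  ultimately show False using gt by linarith
qed

lemma om_inner:
  assumes sp: "A \<subseteq> space M"
    and inner: "\<And>e. e > 0 \<Longrightarrow> \<exists>B \<in> sets M. B \<subseteq> A \<and> measure M B \<ge> om M A - e"
  shows "A \<in> sets (completion M)"
proof -
  obtain H where H: "H \<in> sets M" "A \<subseteq> H" "measure M H = om M A" using om_hull[OF sp] by blast
  have "\<forall>n::nat. \<exists>B. B \<in> sets M \<and> B \<subseteq> A \<and> measure M B \<ge> om M A - 1/Suc n"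
    using inner by (metis of_nat_0_less_iff zero_less_Suc divide_pos_pos zero_less_one)
  then obtain B where B: "\<And>n. B n \<in> sets M" "\<And>n. B n \<subseteq> A" "\<And>n. measure M (B n) \<ge> om M A - 1/Suc n"
    by metis
  define U where "U = (\<Union>n. B n)"
  have Us: "U \<in> sets M" unfolding U_def using B(1) by auto
  have UA: "U \<subseteq> A" unfolding U_def using B(2) by auto
  have "om M A \<le> measure M U"
  proof (rule field_le_epsilon)
    fix e :: real assume "0 < e"
    then obtain n :: nat where n: "1 / Suc n < e"
      using nat_approx_posE by blast
    have "measure M (B n) \<le> measure M U"
      by (rule finite_measure_mono) (auto simp: U_def B(1) Us)
    then show "om M A \<le> measure M U + e" using B(3)[of n] n by linarith
  qed
  moreover have "measure M U \<le> measure M H" using finite_measure_mono[of U H] UA H by auto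
  ultimately have "measure M (H - U) = 0"
    using finite_measure_Diff[OF H(1) Us] UA H(2) H(3) by auto
  then have "H - U \<in> null_sets M" using H(1) Us
    by (simp add: null_sets_def emeasure_eq_measure)
  then show ?thesis
    by (intro sets_completionI[of A U "A - U" "H - U"]) (use UA H Us in auto)
qed

end


context Metric_space begin

lemma tb_crit:
  assumes SM: "S \<subseteq> M"
    and cov: "\<And>e. e > 0 \<Longrightarrow> \<exists>F G. finite F \<and> F \<subseteq> M \<and> finite G \<and> S \<subseteq> G \<union> (\<Union>c\<in>F. mcball c e)"
  shows "mtotally_bounded S"
  unfolding mtotally_bounded_def
proof (intro allI impI)
  fix \<epsilon> :: real assume "\<epsilon> > 0"
  then obtain F G where FG: "finite F" "F \<subseteq> M" "finite G" "S \<subseteq> G \<union> (\<Union>c\<in>F. mcball c (\<epsilon>/3))"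
    using cov[of "\<epsilon>/3"] by auto
  define F' where "F' = {c \<in> F. mcball c (\<epsilon>/3) \<inter> S \<noteq> {}}"
  define s where "s c = (SOME y. y \<in> mcball c (\<epsilon>/3) \<inter> S)" for c
  have s: "s c \<in> mcball c (\<epsilon>/3) \<inter> S" if "c \<in> F'" for c
    unfolding s_def by (rule someI_ex[of "\<lambda>y. y \<in> mcball c (\<epsilon>/3) \<inter> S"]) (use that in \<open>auto simp: F'_def\<close>)
  define K where "K = (G \<inter> S) \<union> s ` F'"
  have "finite K" unfolding K_def F'_def using FG by auto
  moreover have "K \<subseteq> S" unfolding K_def using s by auto
  moreover have "S \<subseteq> (\<Union>x\<in>K. mball x \<epsilon>)"
  proof
    fix x assume xS: "x \<in> S"
    then have xM: "x \<in> M" using SM by auto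
    show "x \<in> (\<Union>x\<in>K. mball x \<epsilon>)"
    proof (cases "x \<in> G")
      case True
      then have "x \<in> K" using xS unfolding K_def by auto
      then show ?thesis using xM \<open>\<epsilon> > 0\<close> by auto
    next
      case False
      then obtain c where c: "c \<in> F" "x \<in> mcball c (\<epsilon>/3)" using FG(4) xS by auto
      then have cF': "c \<in> F'" unfolding F'_def using xS by auto
      have sc: "s c \<in> mcball c (\<epsilon>/3)" "s c \<in> S" using s[OF cF'] by auto
      have "d (s c) x \<le> d (s c) c + d c x" using sc c by (intro triangle) auto
      also have "\<dots> < \<epsilon>"
      proof -
        have "d c (s c) \<le> \<epsilon>/3" "d c x \<le> \<epsilon>/3" using sc(1) c(2) by auto
        then show ?thesis using commute[of "s c" c] \<open>\<epsilon> > 0\<close> by linarith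
      qed
      finally have "x \<in> mball (s c) \<epsilon>" using sc xM SM by auto
      moreover have "s c \<in> K" unfolding K_def using cF' by auto
      ultimately show ?thesis by auto
    qed
  qed
  ultimately show "\<exists>K. finite K \<and> K \<subseteq> S \<and> S \<subseteq> (\<Union>x\<in>K. mball x \<epsilon>)" by blast
qed

lemma lusin_core:
  fixes N :: "'x::topological_space measure" and f :: "'a \<Rightarrow> 'x"
  assumes comp: "mcomplete" and sep: "separable_space mtopology"
    and fin: "finite_measure N" and sN: "sets N = sets borel"
    and H: "Hausdorff_space (euclidean :: 'x topology)"
    and cont: "continuous_map mtopology euclidean f"
  shows "f ` M \<in> sets (completion N)"
proof (cases "M = {}")
  case True
  then show ?thesis by simp
next
  case False
  interpret N: finite_measure N by (rule fin)
  have spN: "space N = UNIV" using sets_eq_imp_space_eq[OF sN] by simp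
  obtain C where C: "countable C" "C \<subseteq> M" "mtopology closure_of C = M"
    using sep unfolding separable_space_def by auto
  have "C \<noteq> {}" using C(3) False by auto
  define D where "D = from_nat_into C"
  have DC: "D k \<in> C" for k unfolding D_def using from_nat_into[OF \<open>C \<noteq> {}\<close>] .
  have DM: "D k \<in> M" for k using DC C(2) by auto
  have dense: "\<exists>k. d p (D k) < r" if pM: "p \<in> M" and rpos: "r > 0" for p r
  proof -
    have "p \<in> mtopology closure_of C" using C(3) pM by auto
    then obtain y where "y \<in> C" "y \<in> mball p r" using rpos unfolding metric_closure_of by auto
    moreover then obtain k where "y = D k" unfolding D_def
      by (metis C(1) from_nat_into_surj)
    ultimately show ?thesis by auto
  qed
  define L where "L m n = {p \<in> M. \<forall>i<n. \<exists>k\<le>m i. d (D k) p \<le> (1/2)^i}" for m :: "nat \<Rightarrow> nat" and n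
  have L_mono: "L m n' \<subseteq> L m n" if "n \<le> n'" for m n n'
    using that unfolding L_def by auto
  have L_M: "L m n \<subseteq> M" for m n unfolding L_def by auto
  have L0: "L m 0 = M" for m unfolding L_def by auto
  have L_cong: "L m n = L m' n" if "\<And>i. i < n \<Longrightarrow> m i = m' i" for m m' n
    using that unfolding L_def by auto
  have L_closed: "closedin mtopology (L m n)" for m n
  proof -
    have "L m n = \<Inter>(insert M ((\<lambda>i. \<Union>k\<in>{..m i}. mcball (D k) ((1/2)^i)) ` {..<n}))"
      unfolding L_def mcball_def using DM by auto
    also have "closedin mtopology \<dots>"
      by (intro closedin_Inter) (auto intro!: closedin_Union)
    finally show ?thesis .
  qed
  define A where "A = f ` M"
  show ?thesis
    unfolding A_def[symmetric]
  proof (rule N.om_inner)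
    show "A \<subseteq> space N" by (simp add: spN)
    fix e :: real assume "e > 0"
    define c where "c = om N A - e"
    have step: "\<exists>j. om N (f ` L (m(n:=j)) (Suc n)) > c" if "om N (f ` L m n) > c" for m n
    proof -
      define Aj where "Aj j = f ` L (m(n:=j)) (Suc n)" for j
      have Aj: "L (m(n:=j)) (Suc n) = L m n \<inter> {p. \<exists>k\<le>j. d (D k) p \<le> (1/2)^n}" for j
        unfolding L_def by (auto simp: less_Suc_eq)
      have inc: "incseq Aj"
      proof (rule incseq_SucI)
        fix j
        have "{p. \<exists>k\<le>j. d (D k) p \<le> (1/2)^n} \<subseteq> {p. \<exists>k\<le>Suc j. d (D k) p \<le> (1/2)^n}"
          using le_SucI by blast
        then show "Aj j \<subseteq> Aj (Suc j)" unfolding Aj_def Aj by blast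
      qed
      have "(\<Union>j. Aj j) = f ` L m n"
      proof
        show "(\<Union>j. Aj j) \<subseteq> f ` L m n" unfolding Aj_def Aj by auto
        show "f ` L m n \<subseteq> (\<Union>j. Aj j)"
        proof
          fix x assume "x \<in> f ` L m n"
          then obtain p where p: "p \<in> L m n" "x = f p" by auto
          have pM: "p \<in> M" using p(1) L_M by blast
          obtain k where "d p (D k) < (1/2)^n" using dense[OF pM, of "(1/2)^n"] by auto
          then have "d (D k) p \<le> (1/2)^n" using commute[of p "D k"] by simp
          then have "p \<in> L (m(n:=k)) (Suc n)" unfolding Aj using p by auto
          then show "x \<in> (\<Union>j. Aj j)" unfolding Aj_def using p by auto
        qed
      qed
      then have "om N (\<Union>j. Aj j) > c" using that by simp
      then obtain j where "om N (Aj j) > c" using N.om_incseq[OF inc, of c] by (auto simp: spN)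
      then show ?thesis unfolding Aj_def by blast
    qed
    define nxt where "nxt n m = (SOME j. om N (f ` L (m(n:=j)) (Suc n)) > c)" for n m
    define pre where "pre = rec_nat (\<lambda>_. 0) (\<lambda>n m. m(n := nxt n m))"
    have pre0: "pre 0 = (\<lambda>_. 0)" and preS: "pre (Suc n) = (pre n)(n := nxt n (pre n))" for n
      unfolding pre_def by auto
    define m where "m n = pre (Suc n) n" for n
    have agree: "\<And>i. i < n \<Longrightarrow> pre n i = m i" for n
    proof (induction n)
      case 0 then show ?case by simp
    next
      case (Suc n)
      then show ?case unfolding m_def preS by (auto simp: less_Suc_eq)
    qed
    have inv: "om N (f ` L (pre n) n) > c" for n
    proof (induction n)
      case 0
      have "om N (f ` L (pre 0) 0) = om N A" unfolding L0 A_def ..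
      then show ?case unfolding c_def using \<open>e > 0\<close> by simp
    next
      case (Suc n)
      have "om N (f ` L ((pre n)(n := nxt n (pre n))) (Suc n)) > c"
        unfolding nxt_def by (rule someI_ex) (rule step[OF Suc])
      then show ?case unfolding preS .
    qed
    have Lm: "om N (f ` L m n) > c" for n
      using inv[of n] L_cong[of n "pre n" m] agree by auto
    define K where "K = (\<Inter>n. L m n)"
    have KM: "K \<subseteq> M" unfolding K_def using L_M[of m 0] by auto
    have pow_small: "\<exists>n. (1/2::real)^n \<le> r" if "r > 0" for r
      using real_arch_pow_inv[OF that, of "1/2"] by (auto intro: less_imp_le)
    have tbL: "mtotally_bounded S" if SM: "S \<subseteq> M" and SL: "\<And>n. \<exists>G. finite G \<and> S \<subseteq> G \<union> L m (Suc n)" for S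
    proof (rule tb_crit[OF SM])
      fix r :: real assume "r > 0"
      then obtain n where n: "(1/2::real)^n \<le> r" using pow_small by auto
      obtain G where G: "finite G" "S \<subseteq> G \<union> L m (Suc n)" using SL by auto
      have "L m (Suc n) \<subseteq> (\<Union>c\<in>D ` {..m n}. mcball c r)"
      proof
        fix p assume p: "p \<in> L m (Suc n)"
        then obtain k where "k \<le> m n" "d (D k) p \<le> (1/2)^n" unfolding L_def by auto
        then show "p \<in> (\<Union>c\<in>D ` {..m n}. mcball c r)" using p L_M[of m "Suc n"] n DM
          by (auto intro!: bexI[of _ k])
      qed
      then show "\<exists>F G. finite F \<and> F \<subseteq> M \<and> finite G \<and> S \<subseteq> G \<union> (\<Union>c\<in>F. mcball c r)"
        using G DM by (intro exI[of _ "D ` {..m n}"] exI[of _ G]) auto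
    qed
    have Kcomp: "compactin mtopology K"
    proof -
      have "mtotally_bounded K" by (rule tbL[OF KM]) (auto simp: K_def)
      then have "compactin mtopology (mtopology closure_of K)"
        using mtotally_bounded_eq_compact_closure_of[OF comp] by auto
      moreover have "closedin mtopology K" unfolding K_def
        using L_closed by (intro closedin_Inter) auto
      ultimately show ?thesis by (simp add: closure_of_closedin)
    qed
    have shrink: "\<exists>n. L m n \<subseteq> W" if W: "openin mtopology W" "K \<subseteq> W" for W
    proof (rule ccontr)
      assume "\<not> ?thesis"
      then have "\<forall>n. \<exists>p. p \<in> L m n \<and> p \<notin> W" by auto
      then obtain p where p: "\<And>n. p n \<in> L m n" "\<And>n. p n \<notin> W" by metis
      have pM: "range p \<subseteq> M" using p(1) L_M by blast
      have "mtotally_bounded (range p)"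
      proof (rule tbL[OF pM])
        fix n
        have "range p \<subseteq> p ` {..n} \<union> L m (Suc n)"
        proof
          fix x assume "x \<in> range p"
          then obtain k where k: "x = p k" by auto
          show "x \<in> p ` {..n} \<union> L m (Suc n)"
          proof (cases "k \<le> n")
            case True then show ?thesis using k by auto
          next
            case False then show ?thesis using k p(1)[of k] L_mono[of "Suc n" k m] by auto
          qed
        qed
        then show "\<exists>G. finite G \<and> range p \<subseteq> G \<union> L m (Suc n)" by blast
      qed
      then have T: "compactin mtopology (mtopology closure_of (range p))"
        using mtotally_bounded_eq_compact_closure_of[OF comp] by auto
      have "range p \<subseteq> mtopology closure_of (range p)"
        using pM by (simp add: closure_of_subset)
      then obtain l r where lr: "strict_mono r" "limitin mtopology (p \<circ> r) l sequentially"
        using T unfolding compactin_sequentially by blast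
      have lL: "l \<in> L m n" for n
      proof (rule limitin_closedin[OF lr(2) L_closed])
        show "\<forall>\<^sub>F x in sequentially. (p \<circ> r) x \<in> L m n"
          unfolding eventually_sequentially
        proof (intro exI allI impI)
          fix k assume "k \<ge> n"
          then have "n \<le> r k" using seq_suble[OF lr(1), of k] by linarith
          then show "(p \<circ> r) k \<in> L m n" using p(1)[of "r k"] L_mono by auto
        qed
      qed auto
      have "l \<in> M - W"
      proof (rule limitin_closedin[OF lr(2)])
        show "closedin mtopology (M - W)" using W(1) closedin_diff[of mtopology M W] by simp
        show "\<forall>\<^sub>F x in sequentially. (p \<circ> r) x \<in> M - W"
          using p(2) pM by (intro always_eventually) auto
      qed auto
      moreover have "l \<in> K" unfolding K_def using lL by auto
      ultimately show False using W by auto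
    qed
    define B where "B = (\<Inter>n. closure (f ` L m n))"
    have Bs: "B \<in> sets N" unfolding B_def sN by auto
    have BK: "B \<subseteq> f ` K"
    proof
      fix x assume xB: "x \<in> B"
      show "x \<in> f ` K"
      proof (rule ccontr)
        assume xK: "x \<notin> f ` K"
        have fK: "compactin euclidean (f ` K)" using image_compactin[OF Kcomp cont] .
        obtain U V where UV: "openin euclidean U" "openin euclidean V" "{x} \<subseteq> U" "f ` K \<subseteq> V" "disjnt U V"
          using Hausdorff_space_compact_separation[OF H _ fK, of "{x}"] xK by auto
        define W where "W = {p \<in> M. f p \<in> V}"
        have "openin mtopology W"
          using openin_continuous_map_preimage[OF cont UV(2)] unfolding W_def by simp
        moreover have "K \<subseteq> W" using UV(4) KM unfolding W_def by auto
        ultimately obtain n where "L m n \<subseteq> W" using shrink by blast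
        then have "f ` L m n \<subseteq> V" unfolding W_def by auto
        then have "x \<in> closure V" using xB unfolding B_def by (meson INT_E UNIV_I closure_mono subsetD)
        moreover have "open U" "open V" "x \<in> U" "U \<inter> V = {}" using UV by (auto simp: disjnt_def)
        ultimately show False using open_Int_closure_eq_empty[of U V] by blast
      qed
    qed
    have BA: "B \<subseteq> A" using BK KM unfolding A_def by auto
    have mB: "measure N (closure (f ` L m n)) \<ge> c" for n
      using N.om_le[of "closure (f ` L m n)" "f ` L m n"] Lm[of n] by (auto simp: sN closure_subset)
    have dec: "decseq (\<lambda>n. closure (f ` L m n))"
      unfolding decseq_def by (intro allI impI closure_mono image_mono L_mono)
    have "(\<lambda>n. measure N (closure (f ` L m n))) \<longlonglongrightarrow> measure N B"
      unfolding B_def by (rule N.finite_Lim_measure_decseq[OF _ dec]) (auto simp: sN)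
    then have "measure N B \<ge> c" by (rule LIMSEQ_le_const) (use mB in auto)
    then show "\<exists>B \<in> sets N. B \<subseteq> A \<and> measure N B \<ge> om N A - e"
      using Bs BA unfolding c_def by auto
  qed
qed

end


context Metric_space begin
lemma sep_second_countable:
  assumes "separable_space mtopology"
  shows "second_countable mtopology"
proof -
  obtain C where C: "countable C" "C \<subseteq> M" "mtopology closure_of C = M"
    using assms unfolding separable_space_def by auto
  define B where "B = (\<lambda>(c,n). mball c (1 / Suc n)) ` (C \<times> (UNIV :: nat set))"
  have "countable B" unfolding B_def using C(1) by auto
  moreover have "\<forall>V\<in>B. openin mtopology V" unfolding B_def by auto
  moreover have "\<exists>V\<in>B. x \<in> V \<and> V \<subseteq> U" if U: "openin mtopology U" "x \<in> U" for U x
  proof -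
    have xM: "x \<in> M" using U openin_subset by fastforce
    obtain r where r: "r > 0" "mball x r \<subseteq> U" using U openin_mtopology by meson
    obtain n :: nat where n: "1 / Suc n < r / 2" using nat_approx_posE[of "r/2"] r by auto
    have "x \<in> mtopology closure_of C" using C(3) xM by auto
    moreover have "1 / real (Suc n) > 0" by simp
    ultimately obtain c where c: "c \<in> C" "c \<in> mball x (1 / Suc n)" unfolding metric_closure_of by blast
    have cM: "c \<in> M" using c C(2) by auto
    have "x \<in> mball c (1 / Suc n)" using c xM cM commute[of x c] by auto
    moreover have "mball c (1 / Suc n) \<subseteq> mball x r"
    proof
      fix y assume y: "y \<in> mball c (1 / Suc n)"
      have "d x y \<le> d x c + d c y" using y xM cM triangle by auto
      also have "\<dots> < r" using y c n by auto
      finally show "y \<in> mball x r" using xM y by auto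
    qed
    moreover have "mball c (1 / Suc n) \<in> B" unfolding B_def using c by auto
    ultimately show ?thesis using r by blast
  qed
  ultimately show ?thesis unfolding second_countable_def by blast
qed
end

lemma Polish_second_countable:
  assumes "Polish_space X" shows "second_countable X"
proof -
  obtain M d where md: "Metric_space M d" "Metric_space.mcomplete M d" "X = Metric_space.mtopology M d"
    using assms unfolding Polish_space_def completely_metrizable_space_def by auto
  interpret Metric_space M d by (rule md(1))
  show ?thesis using assms md(3) sep_second_countable unfolding Polish_space_def by auto
qed

lemma network_image:
  fixes g :: "'p \<Rightarrow> 'a::topological_space"
  assumes sc: "second_countable P" and cont: "continuous_map P euclidean g" and surj: "g ` topspace P = UNIV"
  shows "\<exists>\<N>. countable \<N> \<and> (\<forall>U (x::'a). open U \<and> x \<in> U \<longrightarrow> (\<exists>N\<in>\<N>. x \<in> N \<and> N \<subseteq> U))"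
proof -
  obtain \<B> where B: "countable \<B>" "\<forall>V\<in>\<B>. openin P V"
    "\<forall>U x. openin P U \<and> x \<in> U \<longrightarrow> (\<exists>V\<in>\<B>. x \<in> V \<and> V \<subseteq> U)"
    using sc unfolding second_countable_def by blast
  have key: "\<exists>N\<in>(image g ` \<B>). x \<in> N \<and> N \<subseteq> U" if U: "open U" "x \<in> U" for U x
  proof -
    have "x \<in> g ` topspace P" using surj by simp
    then obtain p where p: "p \<in> topspace P" "x = g p" by (rule imageE)
    have op: "openin P {q \<in> topspace P. g q \<in> U}"
      by (rule openin_continuous_map_preimage[OF cont]) (simp add: U(1))
    have pin: "p \<in> {q \<in> topspace P. g q \<in> U}" using p U(2) by simp
    obtain V where V: "V \<in> \<B>" "p \<in> V" "V \<subseteq> {q \<in> topspace P. g q \<in> U}"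
      using B(3) op pin by meson
    have "g ` V \<in> image g ` \<B>" using V(1) by (rule imageI)
    moreover have "x \<in> g ` V" using V(2) p(2) by simp
    moreover have "g ` V \<subseteq> U" using V(3) by blast
    ultimately show ?thesis by blast
  qed
  have c: "countable (image g ` \<B>)" using B(1) by simp
  have k: "\<forall>U x. open U \<and> x \<in> U \<longrightarrow> (\<exists>N\<in>image g ` \<B>. x \<in> N \<and> N \<subseteq> U)"
  proof (intro allI impI)
    fix U and x :: 'a assume Ux: "open U \<and> x \<in> U"
    show "\<exists>N\<in>image g ` \<B>. x \<in> N \<and> N \<subseteq> U" using key[of U x] Ux by simp
  qed
  show ?thesis by (rule exI[where x="image g ` \<B>"], rule conjI[OF c k])
qed

lemma souslin_network:
  assumes "Souslin_space (euclidean :: 'a::topological_space topology)"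
  shows "\<exists>\<N>. countable \<N> \<and> (\<forall>U (x::'a). open U \<and> x \<in> U \<longrightarrow> (\<exists>N\<in>\<N>. x \<in> N \<and> N \<subseteq> U))"
proof -
  obtain P :: "(nat \<Rightarrow> real) topology" and g where
    "Polish_space P" "continuous_map P euclidean g" "g ` topspace P = (UNIV :: 'a set)"
    using assms unfolding Souslin_space_def analytic_in_def by auto
  then show ?thesis by (intro network_image[of P g]) (auto intro: Polish_second_countable)
qed

lemma polish_network:
  assumes "Polish_space (euclidean :: 'a::topological_space topology)"
  shows "\<exists>\<N>. countable \<N> \<and> (\<forall>U (x::'a). open U \<and> x \<in> U \<longrightarrow> (\<exists>N\<in>\<N>. x \<in> N \<and> N \<subseteq> U))"
proof (rule network_image[OF Polish_second_countable[OF assms], of id])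
  show "continuous_map euclidean euclidean (id :: 'a \<Rightarrow> 'a)" by simp
qed simp

lemma measurable3:
  fixes g1 :: "'m \<Rightarrow> 'a::topological_space" and g2 :: "'m \<Rightarrow> 'b::topological_space"
    and g3 :: "'m \<Rightarrow> 'c::topological_space"
    and \<N>1 :: "'a set set" and \<N>2 :: "'b set set" and \<N>3 :: "'c set set"
  assumes N1: "countable \<N>1" "\<And>U x. open U \<Longrightarrow> x \<in> U \<Longrightarrow> \<exists>N\<in>\<N>1. x \<in> N \<and> N \<subseteq> U"
    and N2: "countable \<N>2" "\<And>U x. open U \<Longrightarrow> x \<in> U \<Longrightarrow> \<exists>N\<in>\<N>2. x \<in> N \<and> N \<subseteq> U"
    and N3: "countable \<N>3" "\<And>U x. open U \<Longrightarrow> x \<in> U \<Longrightarrow> \<exists>N\<in>\<N>3. x \<in> N \<and> N \<subseteq> U"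
    and g: "g1 \<in> borel_measurable M" "g2 \<in> borel_measurable M" "g3 \<in> borel_measurable M"
  shows "(\<lambda>x. (g1 x, g2 x, g3 x)) \<in> borel_measurable M"
proof (rule borel_measurableI)
  fix S :: "('a \<times> 'b \<times> 'c) set" assume S: "open S"
  define good where "good t \<longleftrightarrow> (\<exists>A B C. open A \<and> open B \<and> open C \<and>
      fst t \<times> fst (snd t) \<times> snd (snd t) \<subseteq> A \<times> B \<times> C \<and> A \<times> B \<times> C \<subseteq> S)" for t
  define T where "T = {t \<in> \<N>1 \<times> \<N>2 \<times> \<N>3. good t}"
  have "\<forall>t\<in>T. \<exists>A B C. open A \<and> open B \<and> open C \<and>
      fst t \<times> fst (snd t) \<times> snd (snd t) \<subseteq> A \<times> B \<times> C \<and> A \<times> B \<times> C \<subseteq> S"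
    unfolding T_def good_def by blast
  then obtain A B C where ABC: "\<And>t. t \<in> T \<Longrightarrow> open (A t) \<and> open (B t) \<and> open (C t) \<and>
      fst t \<times> fst (snd t) \<times> snd (snd t) \<subseteq> A t \<times> B t \<times> C t \<and> A t \<times> B t \<times> C t \<subseteq> S"
    by metis
  have Seq: "S = (\<Union>t\<in>T. A t \<times> B t \<times> C t)"
  proof
    show "(\<Union>t\<in>T. A t \<times> B t \<times> C t) \<subseteq> S" using ABC by blast
    show "S \<subseteq> (\<Union>t\<in>T. A t \<times> B t \<times> C t)"
    proof
      fix z assume zS: "z \<in> S"
      obtain a b c where z: "z = (a, b, c)" by (cases z) auto
      obtain A' BC where 1: "open A'" "open BC" "z \<in> A' \<times> BC" "A' \<times> BC \<subseteq> S"
        using open_prod_elim[OF S zS] by metis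
      obtain B' C' where 2: "open B'" "open C'" "(b, c) \<in> B' \<times> C'" "B' \<times> C' \<subseteq> BC"
        using open_prod_elim[OF 1(2), of "(b,c)"] 1(3) z by auto
      obtain n1 where n1: "n1 \<in> \<N>1" "a \<in> n1" "n1 \<subseteq> A'" using N1(2)[OF 1(1)] 1(3) z by auto
      obtain n2 where n2: "n2 \<in> \<N>2" "b \<in> n2" "n2 \<subseteq> B'" using N2(2)[OF 2(1)] 2(3) by auto
      obtain n3 where n3: "n3 \<in> \<N>3" "c \<in> n3" "n3 \<subseteq> C'" using N3(2)[OF 2(2)] 2(3) by auto
      have "good (n1, n2, n3)" unfolding good_def
        using 1 2 n1 n2 n3 by (intro exI[of _ A'] exI[of _ B'] exI[of _ C']) auto
      then have t: "(n1, n2, n3) \<in> T" unfolding T_def using n1 n2 n3 by auto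
      have sub: "n1 \<times> n2 \<times> n3 \<subseteq> A (n1,n2,n3) \<times> B (n1,n2,n3) \<times> C (n1,n2,n3)"
        using ABC[OF t] by simp
      have "z \<in> n1 \<times> n2 \<times> n3" using z n1(2) n2(2) n3(2) by simp
      then have "z \<in> A (n1,n2,n3) \<times> B (n1,n2,n3) \<times> C (n1,n2,n3)"
        using sub by (rule subsetD[rotated])
      then show "z \<in> (\<Union>t\<in>T. A t \<times> B t \<times> C t)" using t by blast
    qed
  qed
  have cT: "countable T"
    by (rule countable_subset[of _ "\<N>1 \<times> \<N>2 \<times> \<N>3"]) (auto simp: T_def N1 N2 N3)
  have "(\<lambda>x. (g1 x, g2 x, g3 x)) -` S \<inter> space M =
      (\<Union>t\<in>T. (g1 -` A t \<inter> space M) \<inter> (g2 -` B t \<inter> space M) \<inter> (g3 -` C t \<inter> space M))"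
    by (subst Seq) auto
  also have "\<dots> \<in> sets M"
    using ABC g cT by (intro sets.countable_UN' sets.Int) (auto intro: measurable_sets)
  finally show "(\<lambda>x. (g1 x, g2 x, g3 x)) -` S \<inter> space M \<in> sets M" .
qed

lemma completion_pullback:
  assumes G: "G \<in> measurable M N" and S: "S \<in> sets (completion (distr M N G))"
  shows "G -` S \<inter> space M \<in> sets (completion M)"
proof -
  obtain S0 N0 N' where SN: "S = S0 \<union> N0" "N0 \<subseteq> N'" "N' \<in> null_sets (distr M N G)"
      "S0 \<in> sets (distr M N G)"
    using sets_completionE[OF S] by metis
  have N': "G -` N' \<inter> space M \<in> null_sets M" using SN(3) null_sets_distr_iff[OF G] by auto
  have S0: "G -` S0 \<inter> space M \<in> sets M" using SN(4) G by (auto intro: measurable_sets)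
  show ?thesis
    by (rule sets_completionI[of _ "G -` S0 \<inter> space M" "G -` N0 \<inter> space M" "G -` N' \<inter> space M"])
       (use SN N' S0 in auto)
qed



theorem theorem5:
  assumes "Polish_space (euclidean :: 'w::topological_space topology)"
    and "Souslin_space (euclidean :: 'f::{order,topological_space} topology)"
    and "Souslin_space (euclidean :: 'r::{order,topological_space} topology)"
    and "borel_order_relation TYPE('f)"
    and "borel_order_relation TYPE('r)"
  shows "quasi_measurable
           (rv_prod3 (rv_DP :: ('w \<Rightarrow> ('f \<times> 'r) set) set) (rv_seq :: ('w \<Rightarrow> nat \<Rightarrow> 'f) set)
                     (rv_seq :: ('w \<Rightarrow> nat \<Rightarrow> 'r) set))
           (rv_bool :: ('w \<Rightarrow> bool) set)
           ev"
proof -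
  obtain Nw :: "'w set set" where Nw: "countable Nw" "\<And>U x. open U \<Longrightarrow> x \<in> U \<Longrightarrow> \<exists>N\<in>Nw. x \<in> N \<and> N \<subseteq> U"
    using polish_network[OF assms(1)] by meson
  obtain Nf :: "'f set set" where Nf: "countable Nf" "\<And>U x. open U \<Longrightarrow> x \<in> U \<Longrightarrow> \<exists>N\<in>Nf. x \<in> N \<and> N \<subseteq> U"
    using souslin_network[OF assms(2)] by meson
  obtain Nr :: "'r set set" where Nr: "countable Nr" "\<And>U x. open U \<Longrightarrow> x \<in> U \<Longrightarrow> \<exists>N\<in>Nr. x \<in> N \<and> N \<subseteq> U"
    using souslin_network[OF assms(3)] by meson
  have Hw: "Hausdorff_space (euclidean :: 'w topology)"
    using assms(1) unfolding Polish_space_def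
    by (intro metrizable_imp_Hausdorff_space completely_metrizable_imp_metrizable_space) simp
  have Hf: "Hausdorff_space (euclidean :: 'f topology)" using assms(2) unfolding Souslin_space_def by simp
  have Hr: "Hausdorff_space (euclidean :: 'r topology)" using assms(3) unfolding Souslin_space_def by simp
  have Hfr: "Hausdorff_space (euclidean :: ('f \<times> 'r) topology)"
    using Hausdorff_space_prod_topology[of "euclidean :: 'f topology" "euclidean :: 'r topology"] Hf Hr
    by simp
  have H3: "Hausdorff_space (euclidean :: ('w \<times> 'f \<times> 'r) topology)"
    using Hausdorff_space_prod_topology[of "euclidean :: 'w topology" "euclidean :: ('f \<times> 'r) topology"] Hw Hfr
    by simp
  show ?thesis unfolding quasi_measurable_def
  proof
    fix \<alpha> :: "'w \<Rightarrow> ('f \<times> 'r) set \<times> (nat \<Rightarrow> 'f) \<times> (nat \<Rightarrow> 'r)"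
    assume \<alpha>: "\<alpha> \<in> rv_prod3 rv_DP rv_seq rv_seq"
    define dp where "dp \<omega> = fst (\<alpha> \<omega>)" for \<omega>
    define xF where "xF \<omega> = fst (snd (\<alpha> \<omega>))" for \<omega>
    define xR where "xR \<omega> = snd (snd (\<alpha> \<omega>))" for \<omega>
    have dpDP: "dp \<in> rv_DP" and xFs: "xF \<in> rv_seq" and xRs: "xR \<in> rv_seq"
      using \<alpha> unfolding rv_prod3_def dp_def xF_def xR_def by auto
    have idm: "(\<lambda>x. x) \<in> (borel_measurable borel :: ('w \<Rightarrow> 'w) set)" by (rule measurable_id)
    have cst: "(\<lambda>_. i) \<in> (rv_nat :: ('w \<Rightarrow> nat) set)" for i
      unfolding rv_nat_def by (rule measurable_const) simp
    have xFi: "(\<lambda>\<omega>. xF \<omega> i) \<in> borel_measurable borel" for i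
    proof -
      have h: "\<forall>\<phi>\<in>(borel_measurable borel :: ('w \<Rightarrow> 'w) set). \<forall>\<gamma>\<in>(rv_nat :: ('w \<Rightarrow> nat) set).
                  (\<lambda>\<omega>. xF (\<phi> \<omega>) (\<gamma> \<omega>)) \<in> rv_borel"
        using xFs unfolding rv_seq_def by simp
      have "(\<lambda>\<omega>. xF ((\<lambda>x. x) \<omega>) ((\<lambda>_. i) \<omega>)) \<in> rv_borel"
        by (rule bspec[OF bspec[OF h idm] cst])
      then show ?thesis unfolding rv_borel_def by simp
    qed
    have xRi: "(\<lambda>\<omega>. xR \<omega> i) \<in> borel_measurable borel" for i
    proof -
      have h: "\<forall>\<phi>\<in>(borel_measurable borel :: ('w \<Rightarrow> 'w) set). \<forall>\<gamma>\<in>(rv_nat :: ('w \<Rightarrow> nat) set).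
                  (\<lambda>\<omega>. xR (\<phi> \<omega>) (\<gamma> \<omega>)) \<in> rv_borel"
        using xRs unfolding rv_seq_def by simp
      have "(\<lambda>\<omega>. xR ((\<lambda>x. x) \<omega>) ((\<lambda>_. i) \<omega>)) \<in> rv_borel"
        by (rule bspec[OF bspec[OF h idm] cst])
      then show ?thesis unfolding rv_borel_def by simp
    qed
    define Sf where "Sf = {(\<omega>, x, y). (x, y) \<in> dp \<omega>}"
    have "analytic_in euclidean Sf" using dpDP unfolding rv_DP_def Sf_def by blast
    then obtain P :: "(nat \<Rightarrow> real) topology" and g where
      Pg: "Polish_space P" "continuous_map P euclidean g" "g ` topspace P = Sf"
      unfolding analytic_in_def by blast
    obtain Mp d where md: "Metric_space Mp d" "Metric_space.mcomplete Mp d" "P = Metric_space.mtopology Mp d"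
      using Pg(1) unfolding Polish_space_def completely_metrizable_space_def by auto
    interpret Mp: Metric_space Mp d by (rule md(1))
    have sepP: "separable_space Mp.mtopology" using Pg(1) md(3) unfolding Polish_space_def by simp
    have gS: "g ` Mp = Sf" using Pg(3) md(3) by simp
    show "ev \<circ> \<alpha> \<in> rv_bool"
      unfolding rv_bool_def universally_measurable_def
    proof (intro CollectI allI impI)
      fix M :: "'w measure" assume M: "prob_space M \<and> sets M = sets borel"
      have sM: "sets M = sets borel" and pM: "prob_space M" using M by auto
      have spM: "space M = UNIV" using sets_eq_imp_space_eq[OF sM] by simp
      define G where "G i \<omega> = (\<omega>, xF \<omega> i, xR \<omega> i)" for i \<omega>
      have bm: "borel_measurable M = borel_measurable borel"
        by (rule measurable_cong_sets[OF sM refl])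
      have Gm: "G i \<in> borel_measurable M" for i
        unfolding G_def
        by (rule measurable3[OF Nw Nf Nr]) (use xFi xRi bm in \<open>auto intro: measurable_ident_sets[OF sM]\<close>)
      have inS: "Sf \<in> sets (completion (distr M borel (G i)))" for i
      proof -
        have "prob_space (distr M borel (G i))"
          by (rule prob_space.prob_space_distr[OF pM Gm])
        then have fin: "finite_measure (distr M borel (G i))" by (simp add: prob_space_def)
        have "g ` Mp \<in> sets (completion (distr M borel (G i)))"
          by (rule Mp.lusin_core[OF md(2) sepP fin _ H3]) (use Pg(2) md(3) in auto)
        then show ?thesis using gS by simp
      qed
      have pre: "G i -` Sf \<inter> space M \<in> sets (completion M)" for i
        by (rule completion_pullback[OF Gm inS])
      have evq: "(ev \<circ> \<alpha>) \<omega> = (\<forall>i. (xF \<omega> i, xR \<omega> i) \<in> dp \<omega>)" for \<omega>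
        unfolding dp_def xF_def xR_def ev_def by (cases "\<alpha> \<omega>") auto
      have "{\<omega>. (ev \<circ> \<alpha>) \<omega>} = (\<Inter>i. G i -` Sf \<inter> space M)"
        unfolding evq G_def Sf_def spM by auto
      also have "\<dots> \<in> sets (completion M)"
        using pre by (intro sets.countable_INT) auto
      finally show "{\<omega>. (ev \<circ> \<alpha>) \<omega>} \<in> sets (completion M)" .
    qed
  qed
qed

end
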